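(* Let $p>1$ and let $\varphi$ be an analytic self-map of $\mathbb{D}$ with $\varphi\in S^p$. Then $D_\varphi:S^p\to S^p$ is compact if and only if $\|\varphi\|_\infty=\sup_{z\in\mathbb{D}}|\varphi(z)|<1$.
   Context: $\mathbb{D}$ is the open unit disk. For $p>1$, $H^p$ is the Hardy space on $\mathbb{D}$ with norm $\|g\|_{H^p}^p=\sup_{0<r<1}\int_0^{2\pi}|g(re^{i\theta})|^p\frac{d\theta}{2\pi}$; $S^p$ is the space of analytic $f$ on $\mathbb{D}$ with $f'\in H^p$, normed by $\|f\|_{S^p}=|f(0)|+\|f'\|_{H^p}$. $D_\varphi f=f'\circ\varphi$. *)

theory Defs
  imports "HOL-Analysis.Analysis"
begin

definition integral_mean :: "real \<Rightarrow> (complex \<Rightarrow> complex) \<Rightarrow> real \<Rightarrow> real" where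
  "integral_mean p g r =
     integral {0..2*pi} (\<lambda>t. cmod (g (complex_of_real r * cis t)) powr p) / (2*pi)"

definition in_Hp :: "real \<Rightarrow> (complex \<Rightarrow> complex) \<Rightarrow> bool" where
  "in_Hp p g \<longleftrightarrow> g holomorphic_on ball 0 1 \<and>
     bdd_above ((integral_mean p g) ` {0<..<1})"

definition Hp_norm :: "real \<Rightarrow> (complex \<Rightarrow> complex) \<Rightarrow> real" where
  "Hp_norm p g = (SUP r\<in>{0<..<1}. integral_mean p g r) powr (1/p)"

definition in_Sp :: "real \<Rightarrow> (complex \<Rightarrow> complex) \<Rightarrow> bool" where
  "in_Sp p f \<longleftrightarrow> f holomorphic_on ball 0 1 \<and> in_Hp p (deriv f)"

definition Sp_norm :: "real \<Rightarrow> (complex \<Rightarrow> complex) \<Rightarrow> real" where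
  "Sp_norm p f = cmod (f 0) + Hp_norm p (deriv f)"

definition D_op :: "(complex \<Rightarrow> complex) \<Rightarrow> (complex \<Rightarrow> complex) \<Rightarrow> (complex \<Rightarrow> complex)" where
  "D_op \<phi> f = deriv f \<circ> \<phi>"

text \<open>A (not necessarily linear-checked) map T is a compact operator S^p -> S^p:
  it maps S^p into S^p, and the image of every norm-bounded sequence has a
  subsequence converging in S^p norm to an element of S^p.\<close>
definition compact_on_Sp :: "real \<Rightarrow> ((complex \<Rightarrow> complex) \<Rightarrow> (complex \<Rightarrow> complex)) \<Rightarrow> bool" where
  "compact_on_Sp p T \<longleftrightarrow>
     (\<forall>f. in_Sp p f \<longrightarrow> in_Sp p (T f)) \<and>
     (\<forall>F :: nat \<Rightarrow> complex \<Rightarrow> complex.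
        (\<forall>n. in_Sp p (F n)) \<and> bdd_above ((\<lambda>n. Sp_norm p (F n)) ` UNIV) \<longrightarrow>
        (\<exists>r g. strict_mono r \<and> in_Sp p g \<and>
           (\<lambda>n. Sp_norm p (\<lambda>z. T (F (r n)) z - g z)) \<longlonglongrightarrow> 0))"

end

theory Submission
  imports Defs "HOL-Complex_Analysis.Complex_Analysis"
begin


lemma xle:
  fixes x e p :: real
  assumes "0 \<le> x" "0 < e" "1 < p"
  shows "x \<le> e + e powr (1-p) * x powr p"
proof (cases "x \<le> e")
  case True
  then show ?thesis using assms by (smt (verit) mult_nonneg_nonneg powr_ge_zero)
next
  case False
  then have xp: "x > 0" using assms by simp
  have "1 \<le> (x/e) powr (p-1)" using False assms by (intro ge_one_powr_ge_zero) auto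
  then have "x \<le> x * (x/e) powr (p-1)" using xp by simp
  also have "x * (x/e) powr (p-1) = e powr (1-p) * x powr p"
  proof -
    have "x * (x/e) powr (p-1) = (x powr 1 * x powr (p-1)) / e powr (p-1)"
      using xp assms by (simp add: powr_divide)
    also have "x powr 1 * x powr (p-1) = x powr p" using xp by (simp add: powr_mult_base)
    also have "e powr (1-p) = 1 / e powr (p-1)" using assms
      by (metis minus_diff_eq powr_minus_divide)
    ultimately show ?thesis by simp
  qed
  finally show ?thesis using assms by (smt (verit) powr_ge_zero)
qed

lemma cont_circ:
  assumes "continuous_on (ball 0 1) h" "0 \<le> r" "r < 1"
  shows "continuous_on S (\<lambda>t. h (complex_of_real r * cis t))"
proof (rule continuous_on_compose2[OF assms(1)])
  show "continuous_on S (\<lambda>t. complex_of_real r * cis t)" by (intro continuous_intros)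
  show "(\<lambda>t. complex_of_real r * cis t) ` S \<subseteq> ball 0 1" using assms by (auto simp: norm_mult)
qed

lemma int_circ_p:
  assumes "continuous_on (ball 0 1) h" "0 \<le> r" "r < 1" "0 < p"
  shows "(\<lambda>t. cmod (h (complex_of_real r * cis t)) powr p) integrable_on {a..b}"
  apply (rule integrable_continuous_interval)
  apply (rule continuous_on_powr')
  using assms by (auto intro!: continuous_intros cont_circ)

lemma int_circ_1:
  assumes "continuous_on (ball 0 1) h" "0 \<le> r" "r < 1"
  shows "(\<lambda>t. cmod (h (complex_of_real r * cis t))) integrable_on {a..b}"
  apply (rule integrable_continuous_interval)
  using assms by (auto intro!: continuous_intros cont_circ)

lemma mean_nonneg: "0 \<le> integral_mean p h r"
  unfolding integral_mean_def
  by (cases "(\<lambda>t. cmod (h (complex_of_real r * cis t)) powr p) integrable_on {0..2*pi}")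
     (auto intro!: integral_nonneg divide_nonneg_pos simp: not_integrable_integral)

lemma mean_mono3:
  assumes "continuous_on (ball 0 1) h1" "continuous_on (ball 0 1) h2" "continuous_on (ball 0 1) h3"
    "0 \<le> r" "r < 1" "0 < p"
    and le: "\<And>z. z \<in> ball 0 1 \<Longrightarrow> cmod (h1 z) powr p \<le> a * cmod (h2 z) powr p + b * cmod (h3 z) powr p"
  shows "integral_mean p h1 r \<le> a * integral_mean p h2 r + b * integral_mean p h3 r"
proof -
  let ?f = "\<lambda>h t. cmod (h (complex_of_real r * cis t)) powr p"
  have i: "?f h integrable_on {0..2*pi}" if "continuous_on (ball 0 1) h" for h
    using int_circ_p[OF that assms(4,5,6)] .
  have i1: "?f h1 integrable_on {0..2*pi}" and i2: "?f h2 integrable_on {0..2*pi}"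
    and i3: "?f h3 integrable_on {0..2*pi}" using i assms by auto
  have "integral {0..2*pi} (?f h1) \<le> integral {0..2*pi} (\<lambda>t. a * ?f h2 t + b * ?f h3 t)"
    apply (rule integral_le[OF i1])
    using integrable_add[OF integrable_on_mult_right[OF i2, of a] integrable_on_mult_right[OF i3, of b]] apply simp
    apply (rule le) using assms by (simp add: norm_mult)
  also have "\<dots> = a * integral {0..2*pi} (?f h2) + b * integral {0..2*pi} (?f h3)"
    using i2 i3 by (simp add: integral_add integrable_on_mult_right)
  finally have "integral {0..2*pi} (?f h1) / (2*pi) \<le> (a * integral {0..2*pi} (?f h2) + b * integral {0..2*pi} (?f h3)) / (2*pi)"
    by (intro divide_right_mono) auto
  then show ?thesis unfolding integral_mean_def by (simp add: add_divide_distrib)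
qed

lemma mean_cong:
  assumes "\<And>z. z \<in> ball 0 1 \<Longrightarrow> a z = b z" "0 \<le> r" "r < 1"
  shows "integral_mean p a r = integral_mean p b r"
  unfolding integral_mean_def using assms by (auto intro!: integral_cong simp: norm_mult)



lemma Hp_norm_nonneg: "0 \<le> Hp_norm p g"
  by (simp add: Hp_norm_def)

lemma mean_le_Hp:
  assumes "in_Hp p g" "0 < p" "r \<in> {0<..<1}"
  shows "integral_mean p g r \<le> Hp_norm p g powr p"
proof -
  let ?S = "SUP r\<in>{0<..<1}. integral_mean p g r"
  have bdd: "bdd_above ((integral_mean p g) ` {0<..<1})" using assms(1) by (simp add: in_Hp_def)
  have le: "integral_mean p g r \<le> ?S" by (rule cSUP_upper[OF assms(3) bdd])
  have "0 \<le> ?S" using le mean_nonneg order_trans by blast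
  then have "Hp_norm p g powr p = ?S" unfolding Hp_norm_def using assms(2)
    by (simp add: powr_powr)
  then show ?thesis using le by simp
qed

lemma Hp_le:
  assumes "0 < p" "\<And>r. r \<in> {0<..<1} \<Longrightarrow> integral_mean p g r \<le> M"
  shows "Hp_norm p g \<le> M powr (1/p)"
proof -
  let ?S = "SUP r\<in>{0<..<1}. integral_mean p g r"
  have "?S \<le> M" by (rule cSUP_least) (use assms in auto)
  moreover have "0 \<le> ?S"
  proof -
    have bdd: "bdd_above ((integral_mean p g) ` {0<..<1})" by (rule bdd_aboveI2[where M=M]) (use assms(2) in auto)
    have "integral_mean p g (1/2) \<le> ?S" by (rule cSUP_upper[OF _ bdd]) auto
    then show ?thesis using mean_nonneg order_trans by blast
  qed
  ultimately show ?thesis unfolding Hp_norm_def using assms(1) by (intro powr_mono2) auto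
qed

lemma var_circle:
  assumes "G holomorphic_on ball 0 1" "0 < \<rho>" "\<rho> < 1" "0 \<le> s" "s \<le> 2*pi"
  shows "cmod (G (complex_of_real \<rho> * cis s) - G (complex_of_real \<rho>))
          \<le> integral {0..2*pi} (\<lambda>u. cmod (deriv G (complex_of_real \<rho> * cis u)))"
proof -
  let ?c = "\<lambda>u. complex_of_real \<rho> * cis u"
  let ?f' = "\<lambda>u. (complex_of_real \<rho> * (\<i> * cis u)) * deriv G (?c u)"
  have cin: "?c u \<in> ball 0 1" for u using assms by (simp add: norm_mult)
  have hol: "G holomorphic_on ball 0 1" by fact
  have dG: "(G has_field_derivative deriv G (?c u)) (at (?c u))" for u
    using cin[of u] hol by (meson DERIV_deriv_iff_field_differentiable holomorphic_on_imp_differentiable_at open_ball)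
  have dc: "(?c has_vector_derivative (complex_of_real \<rho> * (\<i> * cis u))) (at u)" for u
  proof -
    have "(cis has_vector_derivative (\<i> * cis u)) (at u)"
      using has_derivative_cis[OF has_derivative_ident[of "at u"]] by (simp add: has_vector_derivative_def)
    then show ?thesis by (rule has_vector_derivative_mult_right)
  qed
  have D: "((G \<circ> ?c) has_vector_derivative ?f' u) (at u)" for u
    by (rule field_vector_diff_chain_at[OF dc dG])
  have "(?f' has_integral ((G \<circ> ?c) s - (G \<circ> ?c) 0)) {0..s}"
    apply (rule fundamental_theorem_of_calculus) using assms apply simp
    apply (rule has_vector_derivative_at_within) by (rule D)
  then have eq: "G (?c s) - G (complex_of_real \<rho>) = integral {0..s} ?f'" by (simp add: integral_unique)
  have contd: "continuous_on (ball 0 1) (deriv G)"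
    by (intro holomorphic_on_imp_continuous_on holomorphic_deriv hol) auto
  have i1: "(\<lambda>u. cmod (deriv G (?c u))) integrable_on {a..b}" for a b
    by (rule int_circ_1[OF contd]) (use assms in auto)
  have if': "?f' integrable_on {0..s}"
    by (rule integrable_continuous_interval)
       (intro continuous_intros continuous_on_compose2[OF contd] cont_circ, use cin in auto)
  have "cmod (integral {0..s} ?f') \<le> integral {0..s} (\<lambda>u. cmod (deriv G (?c u)))"
    apply (rule integral_norm_bound_integral[OF if' i1])
    using assms by (simp add: norm_mult mult_left_le_one_le)
  also have "\<dots> \<le> integral {0..2*pi} (\<lambda>u. cmod (deriv G (?c u)))"
    apply (rule integral_subset_le) using assms i1 by auto
  finally show ?thesis using eq by simp
qed



lemma sphere_var:
  assumes "G holomorphic_on ball 0 1" "0 < \<rho>" "\<rho> < 1" "cmod w = \<rho>"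
  shows "cmod (G w - G (complex_of_real \<rho>))
          \<le> integral {0..2*pi} (\<lambda>u. cmod (deriv G (complex_of_real \<rho> * cis u)))"
proof -
  have A: "0 \<le> Arg2pi w" "Arg2pi w < 2*pi" "w = complex_of_real \<rho> * cis (Arg2pi w)"
    using Arg2pi[of w] assms(4) by (auto simp: is_Arg_def cis_conv_exp)
  show ?thesis using var_circle[OF assms(1-3) A(1)] A(2,3) by simp
qed

lemma zero_var:
  assumes "G holomorphic_on ball 0 1" "0 < \<rho>" "\<rho> < 1"
  shows "cmod (G 0 - G (complex_of_real \<rho>))
          \<le> integral {0..2*pi} (\<lambda>u. cmod (deriv G (complex_of_real \<rho> * cis u)))"
proof (rule maximum_modulus_frontier[where f="\<lambda>z. G z - G (complex_of_real \<rho>)" and S="cball 0 \<rho>"])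
  have sub: "cball 0 \<rho> \<subseteq> ball 0 1" using assms by auto
  show "(\<lambda>z. G z - G (complex_of_real \<rho>)) holomorphic_on interior (cball 0 \<rho>)"
    unfolding interior_cball using sub assms(1)
    by (intro holomorphic_intros holomorphic_on_subset[OF assms(1)]) auto
  show "continuous_on (closure (cball 0 \<rho>)) (\<lambda>z. G z - G (complex_of_real \<rho>))"
    unfolding closure_closed[OF closed_cball]
    by (intro holomorphic_on_imp_continuous_on holomorphic_intros holomorphic_on_subset[OF assms(1)] sub)
  show "bounded (cball 0 \<rho>)" by simp
  show "0 \<in> cball 0 \<rho>" using assms by simp
  fix z :: complex assume "z \<in> frontier (cball 0 \<rho>)"
  then have "cmod z = \<rho>" using assms by simp
  then show "cmod (G z - G (complex_of_real \<rho>)) \<le> integral {0..2*pi} (\<lambda>u. cmod (deriv G (complex_of_real \<rho> * cis u)))"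
    by (rule sphere_var[OF assms])
qed

lemma V_bound:
  assumes "G holomorphic_on ball 0 1" "0 < \<rho>" "\<rho> < 1" "1 < p" "0 < e"
  shows "integral {0..2*pi} (\<lambda>u. cmod (deriv G (complex_of_real \<rho> * cis u)))
     \<le> 2*pi*(e + e powr (1-p) * integral_mean p (deriv G) \<rho>)"
proof -
  let ?g = "\<lambda>u. cmod (deriv G (complex_of_real \<rho> * cis u))"
  have contd: "continuous_on (ball 0 1) (deriv G)"
    by (intro holomorphic_on_imp_continuous_on holomorphic_deriv assms) auto
  have i1: "?g integrable_on {0..2*pi}" by (rule int_circ_1[OF contd]) (use assms in auto)
  have ip: "(\<lambda>u. ?g u powr p) integrable_on {0..2*pi}" by (rule int_circ_p[OF contd]) (use assms in auto)
  have "integral {0..2*pi} ?g \<le> integral {0..2*pi} (\<lambda>u. e + e powr (1-p) * ?g u powr p)"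
    apply (rule integral_le[OF i1])
    using integrable_add[OF integrable_const_ivl[of e 0 "2*pi"] integrable_on_mult_right[OF ip, of "e powr (1-p)"]]
     apply simp
    using xle assms by auto
  also have "\<dots> = 2*pi*e + e powr (1-p) * integral {0..2*pi} (\<lambda>u. ?g u powr p)"
    apply (subst integral_add[OF integrable_const_ivl integrable_on_mult_right[OF ip]])
    by simp
  also have "\<dots> = 2*pi*(e + e powr (1-p) * integral_mean p (deriv G) \<rho>)"
    unfolding integral_mean_def by (simp add: algebra_simps)
  finally show ?thesis .
qed

lemma emb:
  assumes "G holomorphic_on ball 0 1" "in_Hp p (deriv G)" "1 < p" "w \<in> ball 0 1"
  shows "cmod (G w - G 0) \<le> 8*pi * Hp_norm p (deriv G)"
proof (cases "w = 0")
  case True then show ?thesis by (simp add: Hp_norm_nonneg)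
next
  case False
  define \<rho> where "\<rho> = cmod w"
  have r: "0 < \<rho>" "\<rho> < 1" using False assms(4) by (auto simp: \<rho>_def)
  define N where "N = Hp_norm p (deriv G)"
  have N0: "0 \<le> N" by (simp add: N_def Hp_norm_nonneg)
  have M: "integral_mean p (deriv G) \<rho> \<le> N powr p" unfolding N_def
    by (rule mean_le_Hp[OF assms(2)]) (use r assms in auto)
  show ?thesis
  proof (rule field_le_epsilon)
    fix d :: real assume d: "0 < d"
    define e where "e = N + d / (8*pi)"
    have "0 < d/(8*pi)" using d by simp
    then have e0: "0 < e" "N \<le> e" using N0 by (auto simp: e_def)
    have "e powr (1-p) * integral_mean p (deriv G) \<rho> \<le> e powr (1-p) * N powr p"
      using M by (simp add: mult_left_mono)
    also have "\<dots> \<le> e powr (1-p) * e powr p"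
      using e0 N0 assms(3) by (intro mult_left_mono powr_mono2) auto
    also have "\<dots> = e" using e0 by (simp add: powr_add[symmetric])
    finally have E: "e powr (1-p) * integral_mean p (deriv G) \<rho> \<le> e" .
    have V: "integral {0..2*pi} (\<lambda>u. cmod (deriv G (complex_of_real \<rho> * cis u))) \<le> 4*pi*e"
    proof -
      have "2*pi*(e + e powr (1-p) * integral_mean p (deriv G) \<rho>) \<le> 2*pi*(e+e)"
        by (intro mult_left_mono) (use E in auto)
      also have "\<dots> = 4*pi*e" by simp
      finally show ?thesis using V_bound[OF assms(1) r assms(3) e0(1)] by linarith
    qed
    have "cmod (G w - G 0) \<le> cmod (G w - G (complex_of_real \<rho>)) + cmod (G 0 - G (complex_of_real \<rho>))"
      using norm_triangle_ineq4[of "G w - G (complex_of_real \<rho>)" "G 0 - G (complex_of_real \<rho>)"] by simp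
    also have "\<dots> \<le> 8*pi*e"
      using sphere_var[OF assms(1) r, of w] zero_var[OF assms(1) r] V by (simp add: \<rho>_def)
    also have "\<dots> = 8*pi*N + d" by (simp add: e_def distrib_left)
    finally show "cmod (G w - G 0) \<le> 8*pi * Hp_norm p (deriv G) + d" by (simp add: N_def)
  qed
qed



lemma pw2:
  fixes u x y p :: real
  assumes "0 \<le> u" "0 \<le> x" "0 \<le> y" "u \<le> x + y" "0 < p"
  shows "u powr p \<le> 2 powr p * x powr p + 2 powr p * y powr p"
proof -
  have "u \<le> 2 * max x y" using assms by linarith
  then have "u powr p \<le> (2 * max x y) powr p" using assms by (intro powr_mono2) auto
  also have "\<dots> = 2 powr p * max x y powr p" using assms by (simp add: powr_mult)
  also have "\<dots> \<le> 2 powr p * x powr p + 2 powr p * y powr p"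
    by (cases "x \<le> y") (auto simp: max_def)
  finally show ?thesis .
qed

lemma Hp_diff:
  assumes "in_Hp p a" "in_Hp p b" "0 < p"
  shows "in_Hp p (\<lambda>z. a z - b z)"
proof -
  have ha: "a holomorphic_on ball 0 1" and hb: "b holomorphic_on ball 0 1"
    using assms by (auto simp: in_Hp_def)
  have ca: "continuous_on (ball 0 1) a" and cb: "continuous_on (ball 0 1) b"
    using ha hb holomorphic_on_imp_continuous_on by auto
  have "integral_mean p (\<lambda>z. a z - b z) r \<le> 2 powr p * Hp_norm p a powr p + 2 powr p * Hp_norm p b powr p"
    if r: "r \<in> {0<..<1}" for r
  proof -
    have "integral_mean p (\<lambda>z. a z - b z) r \<le> 2 powr p * integral_mean p a r + 2 powr p * integral_mean p b r"
      apply (rule mean_mono3)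
      using ca cb r assms(3) apply (auto intro!: continuous_intros)[6]
      by (rule pw2) (auto simp: norm_triangle_ineq4 assms(3))
    also have "\<dots> \<le> 2 powr p * Hp_norm p a powr p + 2 powr p * Hp_norm p b powr p"
      using mean_le_Hp[OF assms(1) assms(3) r] mean_le_Hp[OF assms(2) assms(3) r]
      by (intro add_mono mult_left_mono) auto
    finally show ?thesis .
  qed
  then show ?thesis using ha hb unfolding in_Hp_def
    by (auto intro!: holomorphic_intros bdd_aboveI2[where M="2 powr p * Hp_norm p a powr p + 2 powr p * Hp_norm p b powr p"])
qed

lemma Hp_cong:
  assumes "in_Hp p a" "b holomorphic_on ball 0 1" "\<And>z. z \<in> ball 0 1 \<Longrightarrow> a z = b z"
  shows "in_Hp p b" "Hp_norm p a = Hp_norm p b"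
proof -
  have eq: "integral_mean p a r = integral_mean p b r" if "r \<in> {0<..<1}" for r
    by (rule mean_cong) (use assms that in auto)
  then have "(integral_mean p a) ` {0<..<1} = (integral_mean p b) ` {0<..<1}" by auto
  then show "in_Hp p b" "Hp_norm p a = Hp_norm p b" using assms(1,2)
    unfolding in_Hp_def Hp_norm_def by (auto simp: image_def)
qed

lemma deriv_diff_ball:
  assumes "F holomorphic_on ball 0 1" "G holomorphic_on ball 0 1" "z \<in> ball 0 1"
  shows "deriv (\<lambda>z. F z - G z) z = deriv F z - deriv G z"
  by (rule deriv_diff) (use assms holomorphic_on_imp_differentiable_at in auto)

lemma comp_bound:
  assumes "A holomorphic_on ball 0 1" "in_Hp p B" "0 < p" "0 \<le> c"
    and le: "\<And>z. z \<in> ball 0 1 \<Longrightarrow> cmod (A z) \<le> c * cmod (B z)"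
  shows "in_Hp p A" "Hp_norm p A \<le> c * Hp_norm p B"
proof -
  have cA: "continuous_on (ball 0 1) A" using assms holomorphic_on_imp_continuous_on by auto
  have cB: "continuous_on (ball 0 1) B" using assms holomorphic_on_imp_continuous_on
    by (auto simp: in_Hp_def)
  have M: "integral_mean p A r \<le> (c * Hp_norm p B) powr p" if r: "r \<in> {0<..<1}" for r
  proof -
    have "integral_mean p A r \<le> c powr p * integral_mean p B r + 0 * integral_mean p B r"
      apply (rule mean_mono3[OF cA cB cB])
      using r assms(3) apply auto[3]
    proof -
      fix z :: complex assume "z \<in> ball 0 1"
      then have "cmod (A z) powr p \<le> (c * cmod (B z)) powr p" using le assms(3) by (intro powr_mono2) auto
      also have "\<dots> = c powr p * cmod (B z) powr p" using assms(4) by (simp add: powr_mult)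
      finally show "cmod (A z) powr p \<le> c powr p * cmod (B z) powr p + 0 * cmod (B z) powr p" by simp
    qed
    also have "\<dots> \<le> c powr p * Hp_norm p B powr p"
      using mean_le_Hp[OF assms(2) assms(3) r] by (simp add: mult_left_mono)
    also have "\<dots> = (c * Hp_norm p B) powr p" using assms(4) by (simp add: powr_mult Hp_norm_nonneg)
    finally show ?thesis .
  qed
  then show "in_Hp p A" using assms(1) unfolding in_Hp_def by (auto intro!: bdd_aboveI2[where M="(c * Hp_norm p B) powr p"])
  have "Hp_norm p A \<le> ((c * Hp_norm p B) powr p) powr (1/p)" by (rule Hp_le[OF assms(3) M])
  also have "\<dots> = c * Hp_norm p B" using assms(3,4) by (simp add: powr_powr Hp_norm_nonneg)
  finally show "Hp_norm p A \<le> c * Hp_norm p B" .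
qed



lemma deriv_mon: "deriv (\<lambda>z::complex. z^Suc n / of_nat (Suc n)) = (\<lambda>z. z^n)"
proof
  fix z :: complex
  have d0: "((\<lambda>z::complex. z^Suc n) has_field_derivative (1 + of_nat n) * (1 * z^n)) (at z)"
    by (rule DERIV_power_Suc) (rule DERIV_ident)
  have d: "((\<lambda>z::complex. z^Suc n) has_field_derivative (of_nat (Suc n) * z^n)) (at z)"
    using d0 by (simp add: add.commute)
  have "((\<lambda>z::complex. z^Suc n / of_nat (Suc n)) has_field_derivative
          (of_nat (Suc n) * z^n / of_nat (Suc n))) (at z)"
    by (rule DERIV_cdivide[OF d])
  then have "((\<lambda>z::complex. z^Suc n / of_nat (Suc n)) has_field_derivative z^n) (at z)"
    by (simp del: of_nat_Suc)
  then show "deriv (\<lambda>z::complex. z^Suc n / of_nat (Suc n)) z = z^n" by (rule DERIV_imp_deriv)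
qed

lemma mon_Sp:
  assumes "1 < p"
  shows "in_Sp p (\<lambda>z::complex. z^Suc n / of_nat (Suc n))"
    "Sp_norm p (\<lambda>z::complex. z^Suc n / of_nat (Suc n)) \<le> 1"
proof -
  have M: "integral_mean p (\<lambda>z. z^n) r \<le> 1" if r: "r \<in> {0<..<1}" for r
  proof -
    have "integral_mean p (\<lambda>z. z^n) r \<le> 1 * integral_mean p (\<lambda>z. 1) r + 0 * integral_mean p (\<lambda>z. 1) r"
      apply (rule mean_mono3)
      using r assms apply (auto intro!: continuous_intros)[6]
      using assms by (auto simp: norm_power intro!: powr_le1 power_le_one)
    also have "\<dots> = 1" by (simp add: integral_mean_def)
    finally show ?thesis .
  qed
  have H: "in_Hp p (\<lambda>z. z^n)" unfolding in_Hp_def using M by (auto intro!: holomorphic_intros bdd_aboveI2[where M=1])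
  then show "in_Sp p (\<lambda>z::complex. z^Suc n / of_nat (Suc n))"
    unfolding in_Sp_def deriv_mon by (auto intro!: holomorphic_intros)
  have "Hp_norm p (\<lambda>z. z^n) \<le> 1 powr (1/p)" by (rule Hp_le) (use M assms in auto)
  then show "Sp_norm p (\<lambda>z::complex. z^Suc n / of_nat (Suc n)) \<le> 1"
    unfolding Sp_norm_def deriv_mon by simp
qed

lemma forward:
  fixes p :: real and \<phi> :: "complex \<Rightarrow> complex"
  assumes p: "p > 1"
    and hol: "\<phi> holomorphic_on ball 0 1" and maps: "\<phi> ` ball 0 1 \<subseteq> ball 0 1"
    and comp: "compact_on_Sp p (D_op \<phi>)"
  shows "(SUP z\<in>ball 0 1. cmod (\<phi> z)) < 1"
proof -
  define F where "F n = (\<lambda>z::complex. z^Suc n / of_nat (Suc n))" for n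
  have FSp: "\<And>n. in_Sp p (F n)" and Fb: "\<And>n. Sp_norm p (F n) \<le> 1"
    using mon_Sp[OF p] by (auto simp: F_def)
  have Dm: "D_op \<phi> (F m) = (\<lambda>z. \<phi> z ^ m)" for m
    unfolding D_op_def F_def deriv_mon by (simp add: o_def)
  have inv: "\<And>f. in_Sp p f \<Longrightarrow> in_Sp p (D_op \<phi> f)" using comp by (simp add: compact_on_Sp_def)
  have "(\<forall>n. in_Sp p (F n)) \<and> bdd_above ((\<lambda>n. Sp_norm p (F n)) ` UNIV)"
    using FSp Fb by (auto intro!: bdd_aboveI2[where M=1])
  then obtain r g where r: "strict_mono r" and gS: "in_Sp p g"
    and lim0: "(\<lambda>n. Sp_norm p (\<lambda>z. D_op \<phi> (F (r n)) z - g z)) \<longlonglongrightarrow> 0"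
    using comp unfolding compact_on_Sp_def by blast
  define H where "H n = (\<lambda>z. \<phi> z ^ r n - g z)" for n
  define X where "X n = Sp_norm p (H n)" for n
  have lim: "X \<longlonglongrightarrow> 0" unfolding X_def H_def using lim0 by (simp add: Dm)
  have pS: "in_Sp p (\<lambda>z. \<phi> z ^ m)" for m using inv[OF FSp[of m]] by (simp add: Dm)
  have holg: "g holomorphic_on ball 0 1" using gS by (simp add: in_Sp_def)
  have holP: "(\<lambda>z. \<phi> z ^ m) holomorphic_on ball 0 1" for m using pS by (simp add: in_Sp_def)
  have holH: "H n holomorphic_on ball 0 1" for n
    unfolding H_def using holP holg hol by (intro holomorphic_intros)
  have HHp: "in_Hp p (deriv (H n))" for n
  proof -
    have "in_Hp p (\<lambda>z. deriv (\<lambda>z. \<phi> z ^ r n) z - deriv g z)"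
      using Hp_diff pS gS p by (simp add: in_Sp_def)
    moreover have "deriv (H n) holomorphic_on ball 0 1" using holH by (intro holomorphic_deriv) auto
    ultimately show ?thesis
      by (rule Hp_cong(1)) (simp add: H_def deriv_diff_ball[OF holP holg])
  qed
  have bound: "cmod (H n w) \<le> 8*pi * X n" if w: "w \<in> ball 0 1" for n w
  proof -
    have "cmod (H n w) \<le> cmod (H n 0) + cmod (H n w - H n 0)" by (metis norm_triangle_sub add.commute)
    also have "\<dots> \<le> cmod (H n 0) + 8*pi * Hp_norm p (deriv (H n))"
      using emb[OF holH HHp p w] by simp
    also have "\<dots> \<le> 8*pi * X n"
    proof -
      have "cmod (H n 0) \<le> 8*pi * cmod (H n 0)" using pi_gt3 by (simp add: mult_le_cancel_right1)
      then show ?thesis by (simp add: X_def Sp_norm_def distrib_left)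
    qed
    finally show ?thesis .
  qed
  have lim8: "(\<lambda>n. 8*pi * X n) \<longlonglongrightarrow> 0" using tendsto_mult_right_zero[OF lim] by simp
  have g0: "g w = 0" if w: "w \<in> ball 0 1" for w
  proof -
    have "cmod (\<phi> w) < 1" using maps w by (auto simp: subset_iff)
    then have a: "(\<lambda>n. \<phi> w ^ r n) \<longlonglongrightarrow> 0"
      using LIMSEQ_subseq_LIMSEQ[OF LIMSEQ_power_zero r] by (simp add: o_def)
    have b: "(\<lambda>n. H n w) \<longlonglongrightarrow> 0"
      by (rule Lim_null_comparison[OF _ lim8]) (use bound w in auto)
    have "(\<lambda>n. \<phi> w ^ r n - H n w) \<longlonglongrightarrow> 0 - 0" by (intro tendsto_diff a b)
    then have "(\<lambda>n. g w) \<longlonglongrightarrow> 0" by (simp add: H_def)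
    then show ?thesis by (simp add: LIMSEQ_const_iff)
  qed
  have "eventually (\<lambda>n. 8*pi * X n < 1/2) sequentially"
    using order_tendstoD(2)[OF lim8, of "1/2"] by simp
  then obtain N where N: "8*pi * X N < 1/2" by (auto simp: eventually_sequentially)
  define k where "k = r N"
  have pk: "cmod (\<phi> w) ^ k < 1/2" if w: "w \<in> ball 0 1" for w
    using bound[OF w, of N] N g0[OF w] by (simp add: H_def k_def norm_power)
  have k0: "0 < k" using pk[of 0] by (cases k) auto
  have le: "cmod (\<phi> w) \<le> root k (1/2)" if w: "w \<in> ball 0 1" for w
  proof -
    have "cmod (\<phi> w) = root k (cmod (\<phi> w) ^ k)" using k0 by (simp add: real_root_pos2)
    also have "\<dots> \<le> root k (1/2)" using k0 pk[OF w] by simp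
    finally show ?thesis .
  qed
  have "(SUP z\<in>ball 0 1. cmod (\<phi> z)) \<le> root k (1/2)"
    by (rule cSUP_least) (use le in auto)
  also have "\<dots> < 1" using k0 by simp
  finally show ?thesis .
qed



lemma chain_ball:
  assumes "f holomorphic_on ball 0 1" "\<phi> holomorphic_on ball 0 1" "\<phi> ` ball 0 1 \<subseteq> ball 0 1" "z \<in> ball 0 1"
  shows "deriv (\<lambda>z. deriv f (\<phi> z)) z = deriv (deriv f) (\<phi> z) * deriv \<phi> z"
proof (rule deriv_compose_analytic)
  have "deriv f analytic_on ball 0 1" using assms(1) by (simp add: analytic_on_open holomorphic_deriv)
  moreover have "\<phi> z \<in> ball 0 1" using assms(3,4) by (auto simp: image_subset_iff)
  ultimately show "deriv f analytic_on {\<phi> z}" by (auto intro: analytic_on_subset)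
  have "\<phi> analytic_on ball 0 1" using assms(2) by (simp add: analytic_on_open)
  then show "\<phi> analytic_on {z}" using assms(4) by (auto intro: analytic_on_subset)
qed

lemma hol_Dop:
  assumes "f holomorphic_on ball 0 1" "\<phi> holomorphic_on ball 0 1" "\<phi> ` ball 0 1 \<subseteq> ball 0 1"
  shows "(\<lambda>z. deriv f (\<phi> z)) holomorphic_on ball 0 1"
  by (rule holomorphic_deriv_compose[OF assms(1) assms(2) assms(3)]) auto

lemma compD:
  assumes p: "1 < p" and hol: "\<phi> holomorphic_on ball 0 1" and maps: "\<phi> ` ball 0 1 \<subseteq> ball 0 1"
    and phS: "in_Sp p \<phi>" and s1: "s < 1" and sle: "\<And>z. z \<in> ball 0 1 \<Longrightarrow> cmod (\<phi> z) \<le> s"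
    and f: "f holomorphic_on ball 0 1"
  shows "in_Sp p (D_op \<phi> f)"
proof -
  have eq: "D_op \<phi> f = (\<lambda>z. deriv f (\<phi> z))" by (simp add: D_op_def o_def)
  have hD: "(\<lambda>z. deriv f (\<phi> z)) holomorphic_on ball 0 1" by (rule hol_Dop[OF f hol maps])
  have sub: "cball 0 (max s 0) \<subseteq> ball 0 1" using s1 by auto
  have "continuous_on (cball 0 (max s 0)) (deriv (deriv f))"
    by (intro holomorphic_on_imp_continuous_on holomorphic_on_subset[OF _ sub] holomorphic_deriv f) auto
  then have "compact (deriv (deriv f) ` cball 0 (max s 0))" by (intro compact_continuous_image) auto
  then obtain K where K: "K > 0" "\<And>x. x \<in> deriv (deriv f) ` cball 0 (max s 0) \<Longrightarrow> norm x \<le> K"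
    using compact_imp_bounded bounded_pos by metis
  have Kb: "cmod (deriv (deriv f) (\<phi> z)) \<le> K" if "z \<in> ball 0 1" for z
    using K(2) sle[OF that] by auto
  have dD: "deriv (\<lambda>z. deriv f (\<phi> z)) holomorphic_on ball 0 1" by (intro holomorphic_deriv hD) auto
  have "in_Hp p (deriv (\<lambda>z. deriv f (\<phi> z)))"
  proof (rule comp_bound(1)[OF dD _ _ _])
    show "in_Hp p (deriv \<phi>)" using phS by (simp add: in_Sp_def)
    fix z :: complex assume z: "z \<in> ball 0 1"
    show "cmod (deriv (\<lambda>z. deriv f (\<phi> z)) z) \<le> K * cmod (deriv \<phi> z)"
      using chain_ball[OF f hol maps z] Kb[OF z] by (simp add: norm_mult mult_right_mono)
  qed (use p K in auto)
  then show ?thesis unfolding eq in_Sp_def using hD by simp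
qed

lemma cauchy_diff:
  assumes "F holomorphic_on ball 0 1" "f0 holomorphic_on ball 0 1" "0 < d" "cmod \<xi> + d < 1"
    and bnd: "\<And>x. cmod x \<le> cmod \<xi> + d \<Longrightarrow> cmod (F x - f0 x) \<le> \<eta>"
  shows "cmod ((deriv ^^ k) F \<xi> - (deriv ^^ k) f0 \<xi>) \<le> fact k * \<eta> / d^k"
proof -
  have xi: "\<xi> \<in> ball 0 1" using assms by auto
  have sub: "cball \<xi> d \<subseteq> ball 0 1"
  proof
    fix x assume "x \<in> cball \<xi> d"
    then have "cmod x \<le> cmod \<xi> + d" by (metis dist_norm mem_cball norm_triangle_sub order_trans add_le_cancel_left norm_minus_commute)
    then show "x \<in> ball 0 1" using assms by auto
  qed
  have "(deriv ^^ k) F \<xi> - (deriv ^^ k) f0 \<xi> = (deriv ^^ k) (\<lambda>w. F w - f0 w) \<xi>"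
    by (rule higher_deriv_diff[symmetric]) (use assms xi in auto)
  also have "cmod \<dots> \<le> fact k * \<eta> / d^k"
  proof (rule Cauchy_inequality)
    show "(\<lambda>w. F w - f0 w) holomorphic_on ball \<xi> d"
    proof -
      have sb: "ball \<xi> d \<subseteq> ball 0 1" using sub ball_subset_cball by blast
      show ?thesis by (intro holomorphic_intros holomorphic_on_subset[OF assms(1) sb] holomorphic_on_subset[OF assms(2) sb])
    qed
    show "continuous_on (cball \<xi> d) (\<lambda>w. F w - f0 w)"
      using sub assms by (intro holomorphic_on_imp_continuous_on holomorphic_intros) (auto intro: holomorphic_on_subset)
    show "0 < d" by fact
    fix x assume "cmod (\<xi> - x) = d"
    then have "cmod x \<le> cmod \<xi> + d" by (metis norm_triangle_sub order_trans add_le_cancel_left norm_minus_commute order_refl)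
    then show "cmod (F x - f0 x) \<le> \<eta>" by (rule bnd)
  qed
  finally show ?thesis .
qed



lemma Sp_norm_nonneg: "0 \<le> Sp_norm p f"
  by (simp add: Sp_norm_def Hp_norm_nonneg)

lemma backward:
  fixes p :: real and \<phi> :: "complex \<Rightarrow> complex"
  assumes p: "p > 1"
    and hol: "\<phi> holomorphic_on ball 0 1" and maps: "\<phi> ` ball 0 1 \<subseteq> ball 0 1"
    and phS: "in_Sp p \<phi>" and s1: "(SUP z\<in>ball 0 1. cmod (\<phi> z)) < 1"
  shows "compact_on_Sp p (D_op \<phi>)"
proof -
  define s where "s = (SUP z\<in>ball 0 1. cmod (\<phi> z))"
  have s1': "s < 1" using s1 by (simp add: s_def)
  have phb: "cmod (\<phi> z) < 1" if "z \<in> ball 0 1" for z using maps that by (auto simp: image_subset_iff)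
  have bdd: "bdd_above ((\<lambda>z. cmod (\<phi> z)) ` ball 0 1)"
    apply (rule bdd_aboveI2[where M=1]) using phb by (meson less_imp_le)
  have sle: "cmod (\<phi> z) \<le> s" if "z \<in> ball 0 1" for z
    unfolding s_def by (rule cSUP_upper[OF that bdd])
  have "cmod (\<phi> 0) \<le> s" by (rule sle) simp
  then have s0: "0 \<le> s" using norm_ge_zero[of "\<phi> 0"] by linarith
  have inv: "in_Sp p (D_op \<phi> f)" if "in_Sp p f" for f
    by (rule compD[OF p hol maps phS s1' sle]) (use that in \<open>auto simp: in_Sp_def\<close>)
  have main: "\<exists>r g. strict_mono r \<and> in_Sp p g \<and>
           (\<lambda>n. Sp_norm p (\<lambda>z. D_op \<phi> (Fs (r n)) z - g z)) \<longlonglongrightarrow> 0"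
    if FsS: "\<forall>n. in_Sp p (Fs n)" and Fsb: "bdd_above ((\<lambda>n. Sp_norm p (Fs n)) ` UNIV)"
    for Fs :: "nat \<Rightarrow> complex \<Rightarrow> complex"
  proof -
    obtain B where B: "\<And>n. Sp_norm p (Fs n) \<le> B" using Fsb by (auto simp: bdd_above_def)
    have holF: "Fs n holomorphic_on ball 0 1" for n using FsS by (simp add: in_Sp_def)
    have bndF: "cmod (Fs n w) \<le> 8*pi*B" if w: "w \<in> ball 0 1" for n w
    proof -
      have "cmod (Fs n w) \<le> cmod (Fs n 0) + cmod (Fs n w - Fs n 0)" by (metis norm_triangle_sub add.commute)
      also have "\<dots> \<le> cmod (Fs n 0) + 8*pi * Hp_norm p (deriv (Fs n))"
        using emb[OF holF _ p w, of n] FsS by (simp add: in_Sp_def)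
      also have "\<dots> \<le> 8*pi * Sp_norm p (Fs n)"
      proof -
        have "cmod (Fs n 0) \<le> 8*pi * cmod (Fs n 0)" using pi_gt3 by (simp add: mult_le_cancel_right1)
        then show ?thesis by (simp add: Sp_norm_def distrib_left)
      qed
      also have "\<dots> \<le> 8*pi*B" using B[of n] by simp
      finally show ?thesis .
    qed
    obtain f0 r where f0: "f0 holomorphic_on ball 0 1" and r: "strict_mono r"
      and ul: "\<And>K. compact K \<Longrightarrow> K \<subseteq> ball 0 1 \<Longrightarrow> uniform_limit K (Fs \<circ> r) f0 sequentially"
    proof (rule Montel[of "ball 0 1" "range Fs" Fs])
      show "\<And>K. compact K \<Longrightarrow> K \<subseteq> ball 0 1 \<Longrightarrow> \<exists>B. \<forall>h\<in>range Fs. \<forall>z\<in>K. cmod (h z) \<le> B"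
        using bndF by blast
    qed (use holF in auto)
    define g where "g = D_op \<phi> f0"
    have gS: "in_Sp p g" unfolding g_def by (rule compD[OF p hol maps phS s1' sle f0])
    define t where "t = (1+s)/2"
    define d where "d = (1-s)/2"
    have d0: "0 < d" and t1: "t < 1" and td: "s + d = t" using s1' unfolding d_def t_def by (auto simp: field_simps)
    define N where "N = Hp_norm p (deriv \<phi>)"
    have N0: "0 \<le> N" by (simp add: N_def Hp_norm_nonneg)
    have phHp: "in_Hp p (deriv \<phi>)" using phS by (simp add: in_Sp_def)
    define C where "C = 1/d + 2/d^2 * N"
    have C0: "0 < C" using d0 N0 by (simp add: C_def add_pos_nonneg)
    have key: "eventually (\<lambda>n. Sp_norm p (\<lambda>z. D_op \<phi> (Fs (r n)) z - g z) \<le> \<eta> * C) sequentially"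
      if eta: "0 < \<eta>" for \<eta>
    proof -
      have "uniform_limit (cball 0 t) (Fs \<circ> r) f0 sequentially"
        by (rule ul) (use t1 in auto)
      then have ev: "eventually (\<lambda>n. \<forall>x\<in>cball 0 t. dist ((Fs \<circ> r) n x) (f0 x) < \<eta>) sequentially"
        using eta by (simp add: uniform_limit_iff)
      show ?thesis
      proof (rule eventually_mono[OF ev])
        fix n assume H: "\<forall>x\<in>cball 0 t. dist ((Fs \<circ> r) n x) (f0 x) < \<eta>"
        define G where "G = Fs (r n)"
        have holG: "G holomorphic_on ball 0 1" by (simp add: G_def holF)
        have bnd: "cmod (G x - f0 x) \<le> \<eta>" if "cmod x \<le> cmod \<xi> + d" "cmod \<xi> \<le> s" for x \<xi>
          using H that td by (auto simp: G_def dist_norm less_imp_le)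
        have D1: "cmod (deriv G \<xi> - deriv f0 \<xi>) \<le> \<eta> / d" if "cmod \<xi> \<le> s" for \<xi>
        proof -
          have "cmod ((deriv^^1) G \<xi> - (deriv^^1) f0 \<xi>) \<le> fact 1 * \<eta> / d^1"
            apply (rule cauchy_diff[OF holG f0 d0])
            using that td t1 apply simp
            using bnd that by blast
          then show ?thesis by simp
        qed
        have D2: "cmod (deriv (deriv G) \<xi> - deriv (deriv f0) \<xi>) \<le> 2 * \<eta> / d^2" if "cmod \<xi> \<le> s" for \<xi>
        proof -
          have "cmod ((deriv^^2) G \<xi> - (deriv^^2) f0 \<xi>) \<le> fact 2 * \<eta> / d^2"
            apply (rule cauchy_diff[OF holG f0 d0])
            using that td t1 apply simp
            using bnd that by blast
          then show ?thesis by (simp add: numeral_2_eq_2)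
        qed
        define Hn where "Hn = (\<lambda>z. deriv G (\<phi> z) - deriv f0 (\<phi> z))"
        have Heq: "(\<lambda>z. D_op \<phi> (Fs (r n)) z - g z) = Hn"
          by (simp add: Hn_def G_def g_def D_op_def)
        have holH: "Hn holomorphic_on ball 0 1"
          unfolding Hn_def by (intro holomorphic_intros hol_Dop[OF holG hol maps] hol_Dop[OF f0 hol maps])
        have dH: "deriv Hn z = (deriv (deriv G) (\<phi> z) - deriv (deriv f0) (\<phi> z)) * deriv \<phi> z"
          if z: "z \<in> ball 0 1" for z
          unfolding Hn_def
          using deriv_diff_ball[OF hol_Dop[OF holG hol maps] hol_Dop[OF f0 hol maps] z]
            chain_ball[OF holG hol maps z] chain_ball[OF f0 hol maps z]
          by (simp add: algebra_simps)
        have dHhol: "deriv Hn holomorphic_on ball 0 1" by (intro holomorphic_deriv holH) auto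
        have "Hp_norm p (deriv Hn) \<le> (2 * \<eta> / d^2) * N"
          unfolding N_def
        proof (rule comp_bound(2)[OF dHhol phHp])
          fix z :: complex assume z: "z \<in> ball 0 1"
          show "cmod (deriv Hn z) \<le> 2 * \<eta> / d\<^sup>2 * cmod (deriv \<phi> z)"
            using dH[OF z] mult_right_mono[OF D2[OF sle[OF z]] norm_ge_zero[of "deriv \<phi> z"]]
            by (simp add: norm_mult)
        qed (use p eta d0 in auto)
        moreover have "cmod (Hn 0) \<le> \<eta> / d" unfolding Hn_def by (rule D1[OF sle]) simp
        ultimately have "Sp_norm p Hn \<le> \<eta> / d + (2 * \<eta> / d^2) * N"
          by (simp add: Sp_norm_def)
        also have "\<dots> = \<eta> * C" by (simp add: C_def algebra_simps)
        finally show "Sp_norm p (\<lambda>z. D_op \<phi> (Fs (r n)) z - g z) \<le> \<eta> * C" by (simp add: Heq)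
      qed
    qed
    have "(\<lambda>n. Sp_norm p (\<lambda>z. D_op \<phi> (Fs (r n)) z - g z)) \<longlonglongrightarrow> 0"
      unfolding tendsto_iff
    proof (intro allI impI)
      fix e :: real assume e: "0 < e"
      have "eventually (\<lambda>n. Sp_norm p (\<lambda>z. D_op \<phi> (Fs (r n)) z - g z) \<le> (e / (2*C)) * C) sequentially"
        by (rule key) (use e C0 in simp)
      then show "eventually (\<lambda>n. dist (Sp_norm p (\<lambda>z. D_op \<phi> (Fs (r n)) z - g z)) 0 < e) sequentially"
      proof (rule eventually_mono)
        fix n assume "Sp_norm p (\<lambda>z. D_op \<phi> (Fs (r n)) z - g z) \<le> e / (2 * C) * C"
        then show "dist (Sp_norm p (\<lambda>z. D_op \<phi> (Fs (r n)) z - g z)) 0 < e"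
          using C0 e Sp_norm_nonneg[of p] by (simp add: dist_real_def)
      qed
    qed
    then show ?thesis using r gS by blast
  qed
  show ?thesis unfolding compact_on_Sp_def using inv main by blast
qed


theorem theorem3p6:
  fixes p :: real and \<phi> :: "complex \<Rightarrow> complex"
  assumes "p > 1"
    and "\<phi> holomorphic_on ball 0 1" and "\<phi> ` ball 0 1 \<subseteq> ball 0 1"
    and "in_Sp p \<phi>"
  shows "compact_on_Sp p (D_op \<phi>) \<longleftrightarrow> (SUP z\<in>ball 0 1. cmod (\<phi> z)) < 1"
  using forward[OF assms(1,2,3)] backward[OF assms] by blast

end
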